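(* Let $A\subseteq\mathbb{Z}^n$ be a subgroup and let $v=(v_1,\dots,v_n)\in A$ be nonzero with $v\mid w$ for all $w\in A$. Suppose $v_1,\dots,v_q>0$, $v_{q+1},\dots,v_s<0$ and $v_{s+1}=\dots=v_n=0$ for some $0\le q\le s\le n$, $s\ge1$. Let $a_1\le b_1,\dots,a_n\le b_n$ be integers and for $1\le i<j\le s$ put $a_{ij}=\lceil a_i/v_i\rceil-\lfloor b_j/v_j\rfloor$, $b_{ij}=\lfloor b_i/v_i\rfloor-\lceil a_j/v_j\rceil$ if $j\le q$; $a_{ij}=\lceil b_i/v_i\rceil-\lfloor a_j/v_j\rfloor$, $b_{ij}=\lfloor a_i/v_i\rfloor-\lceil b_j/v_j\rceil$ if $q<i$; $a_{ij}=\lceil a_i/v_i\rceil-\lfloor a_j/v_j\rfloor$, $b_{ij}=\lfloor b_i/v_i\rfloor-\lceil b_j/v_j\rceil$ if $i\le q<j$. Then there exists $x=(x_1,\dots,x_n)\in A$ with $a_k\le x_k\le b_k$ for all $k$ if and only if all of the following hold: $0\le\lfloor b_i/v_i\rfloor-\lceil a_i/v_i\rceil$ for all $1\le i\le q$; $0\le\lfloor a_j/v_j\rfloor-\lceil b_j/v_j\rceil$ for all $q<j\le s$; and there exists an element $(z_{12},\dots,z_{(s-1)s},z_1,\dots,z_{n-s})\in L_v(A)$ with $a_{ij}\le z_{ij}\le b_{ij}$ for all $1\le i<j\le s$ and $a_{s+k}\le z_k\le b_{s+k}$ for all $1\le k\le n-s$.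
   Context: For $v,w\in\mathbb{Z}^n$, $v\mid w$ means $v_i$ divides $w_i$ whenever $v_i\neq0$. With $v$ as in the statement (nonzero components exactly $v_1,\dots,v_s$), $L_v:\mathbb{Q}^n\to\mathbb{Q}^{\binom{s}{2}+n-s}$ is $L_v(t_1,\dots,t_n)=(\tfrac{t_1}{v_1}-\tfrac{t_2}{v_2},\dots,\tfrac{t_i}{v_i}-\tfrac{t_j}{v_j},\dots,\tfrac{t_{s-1}}{v_{s-1}}-\tfrac{t_s}{v_s},t_{s+1},\dots,t_n)$, the pairs $i<j$ in $\{1,\dots,s\}$ listed lexicographically; the coordinate indexed by $(i,j)$ is denoted $z_{ij}$ and the last $n-s$ coordinates $z_1,\dots,z_{n-s}$. *)

theory Defs
  imports Main "HOL.Rat"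
begin

text \<open>Vectors of Z^n are represented as functions nat => int, indexed by 1..n,
  vanishing outside {1..n}.\<close>

definition intvec :: "nat \<Rightarrow> (nat \<Rightarrow> int) set" where
  "intvec n = {x. \<forall>k. k \<notin> {1..n} \<longrightarrow> x k = 0}"

definition int_subgroup :: "nat \<Rightarrow> (nat \<Rightarrow> int) set \<Rightarrow> bool" where
  "int_subgroup n A \<longleftrightarrow> A \<subseteq> intvec n \<and> (\<lambda>_. 0) \<in> A \<and>
     (\<forall>x\<in>A. \<forall>y\<in>A. (\<lambda>k. x k + y k) \<in> A) \<and> (\<forall>x\<in>A. (\<lambda>k. - x k) \<in> A)"

definition vdvd :: "nat \<Rightarrow> (nat \<Rightarrow> int) \<Rightarrow> (nat \<Rightarrow> int) \<Rightarrow> bool" where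
  "vdvd n v w \<longleftrightarrow> (\<forall>i\<in>{1..n}. v i \<noteq> 0 \<longrightarrow> v i dvd w i)"

definition cdiv :: "int \<Rightarrow> int \<Rightarrow> int" where
  "cdiv x y = \<lceil>(of_int x / of_int y :: rat)\<rceil>"

definition fdiv :: "int \<Rightarrow> int \<Rightarrow> int" where
  "fdiv x y = \<lfloor>(of_int x / of_int y :: rat)\<rfloor>"

text \<open>An element of
  Q^(binom(s,2)+n-s) is represented as a pair: the coordinates z_ij (1<=i<j<=s)
  as a function of (i,j), and the coordinates z_1..z_(n-s); all other values are 0.\<close>
definition Lv :: "(nat \<Rightarrow> int) \<Rightarrow> nat \<Rightarrow> nat \<Rightarrow> (nat \<Rightarrow> int) \<Rightarrow>
    (nat \<Rightarrow> nat \<Rightarrow> rat) \<times> (nat \<Rightarrow> rat)" where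
  "Lv v s n t =
    ((\<lambda>i j. if 1 \<le> i \<and> i < j \<and> j \<le> s
             then of_int (t i) / of_int (v i) - of_int (t j) / of_int (v j) else 0),
     (\<lambda>k. if 1 \<le> k \<and> k \<le> n - s then of_int (t (s + k)) else 0))"

definition bnd_a :: "(nat \<Rightarrow> int) \<Rightarrow> (nat \<Rightarrow> int) \<Rightarrow> (nat \<Rightarrow> int) \<Rightarrow> nat \<Rightarrow> nat \<Rightarrow> nat \<Rightarrow> int" where
  "bnd_a v a b q i j =
    (if j \<le> q then cdiv (a i) (v i) - fdiv (b j) (v j)
     else if q < i then cdiv (b i) (v i) - fdiv (a j) (v j)
     else cdiv (a i) (v i) - fdiv (a j) (v j))"

definition bnd_b :: "(nat \<Rightarrow> int) \<Rightarrow> (nat \<Rightarrow> int) \<Rightarrow> (nat \<Rightarrow> int) \<Rightarrow> nat \<Rightarrow> nat \<Rightarrow> nat \<Rightarrow> int" where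
  "bnd_b v a b q i j =
    (if j \<le> q then fdiv (b i) (v i) - cdiv (a j) (v j)
     else if q < i then fdiv (a i) (v i) - cdiv (b j) (v j)
     else fdiv (b i) (v i) - cdiv (b j) (v j))"

end

theory Submission
  imports Defs
begin

lemma cdiv_pos: assumes "(v::int) > 0" shows "cdiv c v \<le> t \<longleftrightarrow> c \<le> v*t"
proof -
  have "cdiv c v \<le> t \<longleftrightarrow> of_int c / of_int v \<le> (of_int t::rat)" by (simp add: cdiv_def ceiling_le_iff)
  also have "\<dots> \<longleftrightarrow> (of_int c::rat) \<le> of_int t * of_int v" using assms by (simp add: pos_divide_le_eq)
  also have "\<dots> \<longleftrightarrow> c \<le> v*t" by (metis mult.commute of_int_le_iff of_int_mult)
  finally show ?thesis .
qed

lemma fdiv_pos: assumes "(v::int) > 0" shows "t \<le> fdiv c v \<longleftrightarrow> v*t \<le> c"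
proof -
  have "t \<le> fdiv c v \<longleftrightarrow> (of_int t::rat) \<le> of_int c / of_int v" by (simp add: fdiv_def le_floor_iff)
  also have "\<dots> \<longleftrightarrow> of_int t * of_int v \<le> (of_int c::rat)" using assms by (simp add: pos_le_divide_eq)
  also have "\<dots> \<longleftrightarrow> v*t \<le> c" by (metis mult.commute of_int_le_iff of_int_mult)
  finally show ?thesis .
qed

lemma cdiv_neg: assumes "(v::int) < 0" shows "cdiv c v \<le> t \<longleftrightarrow> v*t \<le> c"
proof -
  have "cdiv c v \<le> t \<longleftrightarrow> of_int c / of_int v \<le> (of_int t::rat)" by (simp add: cdiv_def ceiling_le_iff)
  also have "\<dots> \<longleftrightarrow> of_int t * of_int v \<le> (of_int c::rat)" using assms by (simp add: neg_divide_le_eq)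
  also have "\<dots> \<longleftrightarrow> v*t \<le> c" by (metis mult.commute of_int_le_iff of_int_mult)
  finally show ?thesis .
qed

lemma fdiv_neg: assumes "(v::int) < 0" shows "t \<le> fdiv c v \<longleftrightarrow> c \<le> v*t"
proof -
  have "t \<le> fdiv c v \<longleftrightarrow> (of_int t::rat) \<le> of_int c / of_int v" by (simp add: fdiv_def le_floor_iff)
  also have "\<dots> \<longleftrightarrow> (of_int c::rat) \<le> of_int t * of_int v" using assms by (simp add: neg_le_divide_eq)
  also have "\<dots> \<longleftrightarrow> c \<le> v*t" by (metis mult.commute of_int_le_iff of_int_mult)
  finally show ?thesis .
qed

lemma mult_closed:
  assumes "int_subgroup n A" "v \<in> A" "y \<in> A"
  shows "(\<lambda>k. y k + m * v k) \<in> A"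
proof -
  have add: "\<And>x y. x\<in>A \<Longrightarrow> y\<in>A \<Longrightarrow> (\<lambda>k. x k + y k) \<in> A"
   and neg: "\<And>x. x\<in>A \<Longrightarrow> (\<lambda>k. - x k) \<in> A" using assms(1) unfolding int_subgroup_def by auto
  have nat: "(\<lambda>k. y k + int m' * v k) \<in> A" if "y \<in> A" for y m'
    using that
  proof (induction m')
    case 0 then show ?case by simp
  next
    case (Suc m')
    have "(\<lambda>k. (y k + int m' * v k) + v k) \<in> A" using add[OF Suc.IH[OF Suc.prems] assms(2)] by simp
    moreover have "(\<lambda>k. (y k + int m' * v k) + v k) = (\<lambda>k. y k + int (Suc m') * v k)"
      by (simp add: fun_eq_iff distrib_right)
    ultimately show ?case by simp
  qed
  show ?thesis
  proof (cases "m \<ge> 0")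
    case True
    then have "m = int (nat m)" by simp
    then show ?thesis using nat[OF assms(3), of "nat m"] by simp
  next
    case False
    then have m: "m = - int (nat (-m))" by simp
    have "(\<lambda>k. - (- y k + int (nat (-m)) * v k)) \<in> A" using neg[OF nat[OF neg[OF assms(3)]]] .
    moreover have "(\<lambda>k. - (- y k + int (nat (-m)) * v k)) = (\<lambda>k. y k + m * v k)"
      by (subst m) (simp add: fun_eq_iff)
    ultimately show ?thesis by simp
  qed
qed

theorem mainTheorem2:
  fixes n q s :: nat and A :: "(nat \<Rightarrow> int) set" and v a b :: "nat \<Rightarrow> int"
  assumes "int_subgroup n A"
    and "v \<in> A" and "v \<noteq> (\<lambda>_. 0)"
    and "\<forall>w\<in>A. vdvd n v w"
    and "q \<le> s" and "s \<le> n" and "1 \<le> s"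
    and "\<forall>i\<in>{1..q}. v i > 0"
    and "\<forall>i\<in>{q<..s}. v i < 0"
    and "\<forall>i\<in>{s<..n}. v i = 0"
    and "\<forall>k\<in>{1..n}. a k \<le> b k"
  shows "(\<exists>x\<in>A. \<forall>k\<in>{1..n}. a k \<le> x k \<and> x k \<le> b k) \<longleftrightarrow>
    ((\<forall>i\<in>{1..q}. 0 \<le> fdiv (b i) (v i) - cdiv (a i) (v i)) \<and>
     (\<forall>j\<in>{q<..s}. 0 \<le> fdiv (a j) (v j) - cdiv (b j) (v j)) \<and>
     (\<exists>z\<in>Lv v s n ` A.
        (\<forall>i j. 1 \<le> i \<and> i < j \<and> j \<le> s \<longrightarrow>
           of_int (bnd_a v a b q i j) \<le> fst z i j \<and> fst z i j \<le> of_int (bnd_b v a b q i j)) \<and>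
        (\<forall>k\<in>{1..n - s}. of_int (a (s + k)) \<le> snd z k \<and> snd z k \<le> of_int (b (s + k)))))"
proof -
  define l where "l i = (if i \<le> q then cdiv (a i) (v i) else cdiv (b i) (v i))" for i
  define u where "u i = (if i \<le> q then fdiv (b i) (v i) else fdiv (a i) (v i))" for i
  have vnz: "v i \<noteq> 0" if "i \<in> {1..s}" for i
  proof (cases "i \<le> q")
    case True then have "i \<in> {1..q}" using that by auto
    then show ?thesis using assms(8) by fastforce
  next
    case False then have "i \<in> {q<..s}" using that by auto
    then show ?thesis using assms(9) by fastforce
  qed
  have key: "(a i \<le> v i * t \<and> v i * t \<le> b i) \<longleftrightarrow> (l i \<le> t \<and> t \<le> u i)" if "i \<in> {1..s}" for i t
  proof (cases "i \<le> q")
    case True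
    then have "i \<in> {1..q}" using that by auto
    then have "v i > 0" using assms(8) by auto
    then show ?thesis using True by (simp add: l_def u_def cdiv_pos fdiv_pos)
  next
    case False
    then have "i \<in> {q<..s}" using that by auto
    then have "v i < 0" using assms(9) by auto
    then show ?thesis using False by (auto simp add: l_def u_def cdiv_neg fdiv_neg)
  qed
  have ba: "bnd_a v a b q i j = l i - u j" and bb: "bnd_b v a b q i j = u i - l j" if "i < j" for i j
    using that by (auto simp: bnd_a_def bnd_b_def l_def u_def)
  have tdef: "y i = v i * (y i div v i)" if "y \<in> A" "i \<in> {1..s}" for y i
  proof -
    have "v i dvd y i" using assms(4) that vnz[OF that(2)] assms(6) unfolding vdvd_def by auto
    then show ?thesis by simp
  qed
  have fstL: "fst (Lv v s n y) i j = of_int (y i div v i) - of_int (y j div v j)"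
    if "y \<in> A" "1 \<le> i" "i < j" "j \<le> s" for y i j
  proof -
    have "of_int (y i) / of_int (v i) = (of_int (y i div v i) :: rat)"
      if "i \<in> {1..s}" for i
      using tdef[OF \<open>y\<in>A\<close> that] vnz[OF that]
      by (metis (no_types, opaque_lifting) nonzero_mult_div_cancel_left of_int_eq_0_iff of_int_mult)
    then show ?thesis using that by (simp add: Lv_def)
  qed
  have sndL: "snd (Lv v s n y) k = of_int (y (s+k))" if "k \<in> {1..n-s}" for y k
    using that by (simp add: Lv_def)
  show ?thesis
  proof
    assume "\<exists>x\<in>A. \<forall>k\<in>{1..n}. a k \<le> x k \<and> x k \<le> b k"
    then obtain x where xA: "x \<in> A" and xb: "\<forall>k\<in>{1..n}. a k \<le> x k \<and> x k \<le> b k" by blast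
    define t where "t i = x i div v i" for i
    have lt: "l i \<le> t i \<and> t i \<le> u i" if "i \<in> {1..s}" for i
      using key[OF that, of "t i"] tdef[OF xA that] xb that assms(6) unfolding t_def by auto
    have c1: "\<forall>i\<in>{1..q}. 0 \<le> fdiv (b i) (v i) - cdiv (a i) (v i)"
    proof
      fix i assume "i \<in> {1..q}"
      then show "0 \<le> fdiv (b i) (v i) - cdiv (a i) (v i)" using lt[of i] assms(5) by (auto simp: l_def u_def)
    qed
    have c2: "\<forall>j\<in>{q<..s}. 0 \<le> fdiv (a j) (v j) - cdiv (b j) (v j)"
    proof
      fix i assume "i \<in> {q<..s}"
      then show "0 \<le> fdiv (a i) (v i) - cdiv (b i) (v i)" using lt[of i] assms(5) by (auto simp: l_def u_def)
    qed
    have c3: "(\<forall>i j. 1 \<le> i \<and> i < j \<and> j \<le> s \<longrightarrow>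
           of_int (bnd_a v a b q i j) \<le> fst (Lv v s n x) i j \<and> fst (Lv v s n x) i j \<le> of_int (bnd_b v a b q i j))"
    proof (intro allI impI)
      fix i j assume h: "1 \<le> i \<and> i < j \<and> j \<le> s"
      have "l i - u j \<le> t i - t j" "t i - t j \<le> u i - l j" using lt[of i] lt[of j] h by auto
      then have "(of_int (l i - u j)::rat) \<le> of_int (t i) - of_int (t j)"
           "(of_int (t i) - of_int (t j)::rat) \<le> of_int (u i - l j)"
        by (metis of_int_diff of_int_le_iff)+
      then show "of_int (bnd_a v a b q i j) \<le> fst (Lv v s n x) i j \<and> fst (Lv v s n x) i j \<le> of_int (bnd_b v a b q i j)"
        using h fstL[OF xA, of i j] ba[of i j] bb[of i j] unfolding t_def by auto
    qed
    have c4: "\<forall>k\<in>{1..n - s}. of_int (a (s + k)) \<le> snd (Lv v s n x) k \<and> snd (Lv v s n x) k \<le> of_int (b (s + k))"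
    proof
      fix k assume k: "k \<in> {1..n-s}"
      then have "s + k \<in> {1..n}" by auto
      then show "of_int (a (s + k)) \<le> snd (Lv v s n x) k \<and> snd (Lv v s n x) k \<le> of_int (b (s + k))"
        using xb sndL[OF k] by auto
    qed
    show "(\<forall>i\<in>{1..q}. 0 \<le> fdiv (b i) (v i) - cdiv (a i) (v i)) \<and>
     (\<forall>j\<in>{q<..s}. 0 \<le> fdiv (a j) (v j) - cdiv (b j) (v j)) \<and>
     (\<exists>z\<in>Lv v s n ` A.
        (\<forall>i j. 1 \<le> i \<and> i < j \<and> j \<le> s \<longrightarrow>
           of_int (bnd_a v a b q i j) \<le> fst z i j \<and> fst z i j \<le> of_int (bnd_b v a b q i j)) \<and>
        (\<forall>k\<in>{1..n - s}. of_int (a (s + k)) \<le> snd z k \<and> snd z k \<le> of_int (b (s + k))))"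
      using c1 c2 c3 c4 xA by blast
  next
    assume H: "(\<forall>i\<in>{1..q}. 0 \<le> fdiv (b i) (v i) - cdiv (a i) (v i)) \<and>
     (\<forall>j\<in>{q<..s}. 0 \<le> fdiv (a j) (v j) - cdiv (b j) (v j)) \<and>
     (\<exists>z\<in>Lv v s n ` A.
        (\<forall>i j. 1 \<le> i \<and> i < j \<and> j \<le> s \<longrightarrow>
           of_int (bnd_a v a b q i j) \<le> fst z i j \<and> fst z i j \<le> of_int (bnd_b v a b q i j)) \<and>
        (\<forall>k\<in>{1..n - s}. of_int (a (s + k)) \<le> snd z k \<and> snd z k \<le> of_int (b (s + k))))"
    then obtain y where yA: "y \<in> A" and
      hz: "\<forall>i j. 1 \<le> i \<and> i < j \<and> j \<le> s \<longrightarrow>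
           of_int (bnd_a v a b q i j) \<le> fst (Lv v s n y) i j \<and> fst (Lv v s n y) i j \<le> of_int (bnd_b v a b q i j)"
      and hk: "\<forall>k\<in>{1..n - s}. of_int (a (s + k)) \<le> snd (Lv v s n y) k \<and> snd (Lv v s n y) k \<le> of_int (b (s + k))"
      by blast
    define t where "t i = y i div v i" for i
    have ne: "l i \<le> u i" if "i \<in> {1..s}" for i
      using H that by (cases "i \<le> q") (auto simp: l_def u_def)
    have P: "l i - t i \<le> u j - t j" if "i \<in> {1..s}" "j \<in> {1..s}" for i j
    proof -
      consider "i = j" | "i < j" | "j < i" by linarith
      then show ?thesis
      proof cases
        case 1 then show ?thesis using ne[OF that(1)] by simp
      next
        case 2
        have "(of_int (l i - u j)::rat) \<le> of_int (t i) - of_int (t j)"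
          using hz[rule_format, of i j] 2 that fstL[OF yA, of i j] ba[of i j] unfolding t_def by auto
        then have "l i - u j \<le> t i - t j" by (metis of_int_diff of_int_le_iff)
        then show ?thesis by simp
      next
        case 3
        have "(of_int (t j) - of_int (t i)::rat) \<le> of_int (u j - l i)"
          using hz[rule_format, of j i] 3 that fstL[OF yA, of j i] bb[of j i] unfolding t_def by auto
        then have "t j - t i \<le> u j - l i" by (metis of_int_diff of_int_le_iff)
        then show ?thesis by simp
      qed
    qed
    define m where "m = Max ((\<lambda>i. l i - t i) ` {1..s})"
    have m1: "l i - t i \<le> m" if "i \<in> {1..s}" for i
      unfolding m_def using that by (intro Max_ge) auto
    obtain i0 where i0: "i0 \<in> {1..s}" "m = l i0 - t i0"
    proof -
      have "m \<in> (\<lambda>i. l i - t i) ` {1..s}" unfolding m_def using assms(7) by (intro Max_in) auto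
      then show ?thesis using that by auto
    qed
    define x where "x = (\<lambda>k. y k + m * v k)"
    have xA: "x \<in> A" unfolding x_def using mult_closed[OF assms(1,2) yA] .
    have "\<forall>k\<in>{1..n}. a k \<le> x k \<and> x k \<le> b k"
    proof
      fix k assume k: "k \<in> {1..n}"
      show "a k \<le> x k \<and> x k \<le> b k"
      proof (cases "k \<le> s")
        case True
        then have ks: "k \<in> {1..s}" using k by auto
        have "x k = v k * (t k + m)" unfolding x_def t_def using tdef[OF yA ks]
          by (simp add: algebra_simps)
        moreover have "l k \<le> t k + m \<and> t k + m \<le> u k"
          using m1[OF ks] P[OF i0(1) ks] i0(2) by auto
        ultimately show ?thesis using key[OF ks] by auto
      next
        case False
        then have "v k = 0" using assms(10) k by auto
        then have xk: "x k = y k" unfolding x_def by simp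
        have kk: "k - s \<in> {1..n-s}" "s + (k - s) = k" using False k by auto
        have "(of_int (a k)::rat) \<le> of_int (y k) \<and> (of_int (y k)::rat) \<le> of_int (b k)"
          using hk[rule_format, OF kk(1)] sndL[OF kk(1), of y] kk(2) by simp
        then show ?thesis using xk by simp
      qed
    qed
    then show "\<exists>x\<in>A. \<forall>k\<in>{1..n}. a k \<le> x k \<and> x k \<le> b k" using xA by blast
  qed
qed

end
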